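(* Let $p,q,r$ be distinct sentential variables. In the class of $\Delta$ models (described in the context), each of the following implications holds, where $\varphi\models_\Delta\psi$ means that $[\![\varphi]\!]_M\subseteq[\![\psi]\!]_M$ for every $\Delta$ model $M$: (a) $\mathbb{O}p\wedge(\neg p\succ\neg q)\models_\Delta \mathbb{O}q$; (b) $\mathbb{O}q\wedge(p\succ q)\models_\Delta \mathbb{O}p$; (c) $\mathbb{C}(p,q)\wedge p\models_\Delta \mathbb{O}q$; (d) $\mathbb{C}(p\wedge r,q)\wedge\mathbb{C}(p\wedge\neg r,q)\models_\Delta \mathbb{C}(p,q)$; (e) $\mathbb{C}(p,q)\models_\Delta \mathbb{C}(p\wedge r,q)\vee\mathbb{C}(p\wedge\neg r,q)$; (f) $\mathbb{O}(p\wedge q)\wedge\mathbb{O}(p\wedge\neg q)\models_\Delta \mathbb{O}p$.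
   Context: Fix a set $\mathrm{PROPS}$ of sentential variables (containing $p,q,r$). The language $\mathcal{L}$: every $v\in\mathrm{PROPS}$ is a formula; if $\varphi,\psi$ are formulas so are $\neg\varphi$, $(\varphi\wedge\psi)$, $(\varphi\succeq\psi)$. Abbreviations: $\vee,\rightarrow,\leftrightarrow$ as usual in terms of $\neg,\wedge$; $\varphi\succ\psi := (\varphi\succeq\psi)\wedge\neg(\psi\succeq\varphi)$; $\top := (v_0\rightarrow v_0)$ for a fixed variable $v_0$. Deontic operators: $\mathbb{C}(\varphi,\psi) := (\varphi\wedge\psi)\succ(\varphi\wedge\neg\psi)$ (conditional obligation); $\mathbb{O}\psi := \mathbb{C}(\top,\psi)$ (obligation); $\mathbb{P}\psi:=\neg\mathbb{O}\neg\psi$ (permission). A model is $M=(W,\sigma,u,t)$ with $W$ a nonempty set, $\sigma:W\times\{A\subseteq W:A\ne\emptyset\}\to W$ with $\sigma(w,A)\in A$, $u:W\to\mathbb{R}$, and $t:\mathrm{PROPS}\to\mathcal{P}(W)$. Semantics: $[\![v]\!]_M=t(v)$; $[\![\neg\theta]\!]_M=W\setminus[\![\theta]\!]_M$; $[\![\theta\wedge\psi]\!]_M=[\![\theta]\!]_M\cap[\![\psi]\!]_M$; $[\![\theta\succeq\psi]\!]_M=\emptyset$ if either $[\![\theta]\!]_M$ or $[\![\psi]\!]_M$ is empty, otherwise $\{w: u(\sigma(w,[\![\theta]\!]_M))\ge u(\sigma(w,[\![\psi]\!]_M))\}$. A model is a $\Delta$ model if (i) $W$ is the power set of $\mathrm{PROPS}$;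 (ii) $t(v)=\{w\in W: v\in w\}$ for each $v\in\mathrm{PROPS}$; (iii) $\sigma$ is $\Delta$-based: for all $w_0\in W$ and nonempty $A\subseteq W$ there is no $w_1\in A$ with $w_0\,\triangle\, w_1\subsetneq w_0\,\triangle\,\sigma(w_0,A)$, where $\triangle$ denotes symmetric difference of sets. The utility function $u$ is arbitrary. *)

theory Defs
  imports Main Complex_Main
begin

datatype 'v form = Var 'v | Neg "'v form" | Conj "'v form" "'v form" | Pref "'v form" "'v form"

definition Disj :: "'v form \<Rightarrow> 'v form \<Rightarrow> 'v form" where
  "Disj a b = Neg (Conj (Neg a) (Neg b))"
definition Imp :: "'v form \<Rightarrow> 'v form \<Rightarrow> 'v form" where
  "Imp a b = Neg (Conj a (Neg b))"
definition SPref :: "'v form \<Rightarrow> 'v form \<Rightarrow> 'v form" where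
  "SPref a b = Conj (Pref a b) (Neg (Pref b a))"
definition Top :: "'v \<Rightarrow> 'v form" where
  "Top v0 = Imp (Var v0) (Var v0)"
definition CondOb :: "'v form \<Rightarrow> 'v form \<Rightarrow> 'v form" where
  "CondOb a b = SPref (Conj a b) (Conj a (Neg b))"
definition Ob :: "'v \<Rightarrow> 'v form \<Rightarrow> 'v form" where
  "Ob v0 b = CondOb (Top v0) b"
definition Perm :: "'v \<Rightarrow> 'v form \<Rightarrow> 'v form" where
  "Perm v0 b = Neg (Ob v0 (Neg b))"

fun sem :: "'w set \<Rightarrow> ('w \<Rightarrow> 'w set \<Rightarrow> 'w) \<Rightarrow> ('w \<Rightarrow> real) \<Rightarrow> ('v \<Rightarrow> 'w set) \<Rightarrow> 'v form \<Rightarrow> 'w set" where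
  "sem W \<sigma> u t (Var v) = t v"
| "sem W \<sigma> u t (Neg a) = W - sem W \<sigma> u t a"
| "sem W \<sigma> u t (Conj a b) = sem W \<sigma> u t a \<inter> sem W \<sigma> u t b"
| "sem W \<sigma> u t (Pref a b) =
     (if sem W \<sigma> u t a = {} \<or> sem W \<sigma> u t b = {} then {}
      else {w \<in> W. u (\<sigma> w (sem W \<sigma> u t a)) \<ge> u (\<sigma> w (sem W \<sigma> u t b))})"

definition is_model :: "'w set \<Rightarrow> ('w \<Rightarrow> 'w set \<Rightarrow> 'w) \<Rightarrow> ('w \<Rightarrow> real) \<Rightarrow> ('v \<Rightarrow> 'w set) \<Rightarrow> bool" where
  "is_model W \<sigma> u t \<longleftrightarrow> W \<noteq> {} \<and> (\<forall>v. t v \<subseteq> W) \<and>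
     (\<forall>w\<in>W. \<forall>A. A \<subseteq> W \<and> A \<noteq> {} \<longrightarrow> \<sigma> w A \<in> A \<and> \<sigma> w A \<in> W)"

definition symdiff :: "'a set \<Rightarrow> 'a set \<Rightarrow> 'a set" where
  "symdiff A B = (A - B) \<union> (B - A)"

(* Delta models: worlds are the subsets of PROPS (here: the variable type 'v) *)
definition delta_model :: "'v set set \<Rightarrow> ('v set \<Rightarrow> 'v set set \<Rightarrow> 'v set) \<Rightarrow> ('v set \<Rightarrow> real) \<Rightarrow> ('v \<Rightarrow> 'v set set) \<Rightarrow> bool" where
  "delta_model W \<sigma> u t \<longleftrightarrow> is_model W \<sigma> u t \<and> W = Pow UNIV \<and> (\<forall>v. t v = {w \<in> W. v \<in> w}) \<and>
     (\<forall>w0\<in>W. \<forall>A. A \<subseteq> W \<and> A \<noteq> {} \<longrightarrow>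
        \<not> (\<exists>w1\<in>A. symdiff w0 w1 \<subset> symdiff w0 (\<sigma> w0 A)))"

definition delta_entails :: "'v form \<Rightarrow> 'v form \<Rightarrow> bool" where
  "delta_entails a b \<longleftrightarrow> (\<forall>W \<sigma> u t. delta_model W \<sigma> u t \<longrightarrow> sem W \<sigma> u t a \<subseteq> sem W \<sigma> u t b)"

end

theory Submission
  imports Defs
begin

lemma dm: assumes "delta_model W \<sigma> u t"
  shows "W = UNIV" "\<And>v. t v = {x. v \<in> x}"
    "\<And>w A. A \<noteq> {} \<Longrightarrow> \<sigma> w A \<in> A"
    "\<And>w A y. y \<in> A \<Longrightarrow> \<not> (symdiff w y \<subset> symdiff w (\<sigma> w A))"
proof -
  show "W = UNIV" "\<And>v. t v = {x. v \<in> x}" using assms unfolding delta_model_def is_model_def by auto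
  show "\<And>w A. A \<noteq> {} \<Longrightarrow> \<sigma> w A \<in> A" using assms unfolding delta_model_def is_model_def by auto
  show "\<And>w A y. y \<in> A \<Longrightarrow> \<not> (symdiff w y \<subset> symdiff w (\<sigma> w A))"
  proof -
    fix w A y assume "(y::'a set) \<in> A"
    then show "\<not> (symdiff w y \<subset> symdiff w (\<sigma> w A))" using assms unfolding delta_model_def
      by (metis Pow_UNIV UNIV_I empty_iff subset_UNIV)
  qed
qed

lemma sel_eq: assumes D: "delta_model W \<sigma> u t" and "y \<in> A"
  and "symdiff w y \<subseteq> symdiff w (\<sigma> w A)" shows "\<sigma> w A = y"
proof -
  have "symdiff w y = symdiff w (\<sigma> w A)" using dm(4)[OF D, of y A w] assms by blast
  thus ?thesis unfolding symdiff_def by blast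
qed

lemma sel_least: assumes D: "delta_model W \<sigma> u t" and "y \<in> A"
  and "\<And>x. x \<in> A \<Longrightarrow> symdiff w y \<subseteq> symdiff w x" shows "\<sigma> w A = y"
proof -
  have "\<sigma> w A \<in> A" using dm(3)[OF D] assms(2) by blast
  thus ?thesis using sel_eq[OF D assms(2)] assms(3) by blast
qed

lemma sem_simps: assumes D: "delta_model W \<sigma> u t"
  shows "sem W \<sigma> u t (Var v) = {x. v \<in> x}"
   "sem W \<sigma> u t (Neg a) = - sem W \<sigma> u t a"
   "sem W \<sigma> u t (Conj a b) = sem W \<sigma> u t a \<inter> sem W \<sigma> u t b"
   "sem W \<sigma> u t (Disj a b) = sem W \<sigma> u t a \<union> sem W \<sigma> u t b"
   "sem W \<sigma> u t (SPref a b) = (if sem W \<sigma> u t a = {} \<or> sem W \<sigma> u t b = {} then {} else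
       {w. u (\<sigma> w (sem W \<sigma> u t a)) > u (\<sigma> w (sem W \<sigma> u t b))})"
   "sem W \<sigma> u t (Top v0) = UNIV"
  using dm[OF D] by (auto simp: Disj_def SPref_def Top_def Imp_def)

lemma sem_CO: assumes D: "delta_model W \<sigma> u t"
  shows "sem W \<sigma> u t (CondOb a b) = (if sem W \<sigma> u t a \<inter> sem W \<sigma> u t b = {} \<or> sem W \<sigma> u t a - sem W \<sigma> u t b = {} then {} else
       {w. u (\<sigma> w (sem W \<sigma> u t a \<inter> sem W \<sigma> u t b)) > u (\<sigma> w (sem W \<sigma> u t a - sem W \<sigma> u t b))})"
  unfolding CondOb_def sem_simps[OF D] by (simp add: Diff_eq)

lemma sem_Ob: assumes D: "delta_model W \<sigma> u t"
  shows "sem W \<sigma> u t (Ob v0 b) = (if sem W \<sigma> u t b = {} \<or> sem W \<sigma> u t b = UNIV then {} else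
       {w. u (\<sigma> w (sem W \<sigma> u t b)) > u (\<sigma> w (- sem W \<sigma> u t b))})"
  unfolding Ob_def sem_CO[OF D] sem_simps[OF D] by (auto simp add: Diff_eq)

lemma sel_char: assumes D: "delta_model W \<sigma> u t"
  and A: "\<And>x. x \<in> A \<longleftrightarrow> S \<subseteq> x \<and> T \<inter> x = {}" and ST: "S \<inter> T = {}"
  shows "\<sigma> w A = (w \<union> S) - T"
  by (rule sel_least[OF D]) (use A ST in \<open>auto simp: symdiff_def\<close>)

lemma semV: assumes D: "delta_model W \<sigma> u t" shows "x \<in> sem W \<sigma> u t (Var v) \<longleftrightarrow> v \<in> x"
  using dm[OF D] by simp

lemma del_nin[simp]: "p \<notin> w \<Longrightarrow> w - {p} = w" by auto

lemma CO_eq: assumes D: "delta_model W \<sigma> u t"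
  and "xa \<in> sem W \<sigma> u t a \<inter> sem W \<sigma> u t b" and "xb \<in> sem W \<sigma> u t a - sem W \<sigma> u t b"
  shows "sem W \<sigma> u t (CondOb a b) = {w. u (\<sigma> w (sem W \<sigma> u t a - sem W \<sigma> u t b)) < u (\<sigma> w (sem W \<sigma> u t a \<inter> sem W \<sigma> u t b))}"
  using assms(2,3) unfolding sem_CO[OF D] by auto

lemma Ob_eq: assumes D: "delta_model W \<sigma> u t"
  and "xa \<in> sem W \<sigma> u t b" and "xb \<notin> sem W \<sigma> u t b"
  shows "sem W \<sigma> u t (Ob v0 b) = {w. u (\<sigma> w (- sem W \<sigma> u t b)) < u (\<sigma> w (sem W \<sigma> u t b))}"
  using assms(2,3) unfolding sem_Ob[OF D] by auto

lemma SP_eq: assumes D: "delta_model W \<sigma> u t"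
  and "xa \<in> sem W \<sigma> u t a" and "xb \<in> sem W \<sigma> u t b"
  shows "sem W \<sigma> u t (SPref a b) = {w. u (\<sigma> w (sem W \<sigma> u t b)) < u (\<sigma> w (sem W \<sigma> u t a))}"
  using assms(2,3) unfolding sem_simps(5)[OF D] by auto


lemma sel_self: assumes D: "delta_model W \<sigma> u t" and "w \<in> A" shows "\<sigma> w A = w"
  by (rule sel_least[OF D assms(2)]) (auto simp: symdiff_def)

lemma partA: assumes "p \<noteq> q"
  shows "delta_entails (Conj (Ob v0 (Var p)) (SPref (Neg (Var p)) (Neg (Var q)))) (Ob v0 (Var q))"
  unfolding delta_entails_def
proof (intro allI impI subsetI)
  fix W \<sigma> u t w assume D: "delta_model W \<sigma> u t" and
    w: "w \<in> sem W \<sigma> u t (Conj (Ob v0 (Var p)) (SPref (Neg (Var p)) (Neg (Var q))))"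
  let ?P = "sem W \<sigma> u t (Var p)" and ?Q = "sem W \<sigma> u t (Var q)"
  note V = semV[OF D] dm(1,2)[OF D] sem_simps(2-6)[OF D]
  have e1: "\<And>w. \<sigma> w ?P = (w \<union> {p}) - {}" by (rule sel_char[OF D]) (auto simp: V)
  have e2: "\<And>w. \<sigma> w (- ?P) = (w \<union> {}) - {p}" by (rule sel_char[OF D]) (auto simp: V)
  have e3: "\<And>w. \<sigma> w ?Q = (w \<union> {q}) - {}" by (rule sel_char[OF D]) (auto simp: V)
  have e4: "\<And>w. \<sigma> w (- ?Q) = (w \<union> {}) - {q}" by (rule sel_char[OF D]) (auto simp: V)
  have L1: "sem W \<sigma> u t (Ob v0 (Var p)) = {w. u (\<sigma> w (- ?P)) < u (\<sigma> w ?P)}"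
    by (rule Ob_eq[OF D, where xa="{p}" and xb="{}"]) (use assms in \<open>auto simp: V\<close>)
  have L2: "sem W \<sigma> u t (SPref (Neg (Var p)) (Neg (Var q))) = {w. u (\<sigma> w (- ?Q)) < u (\<sigma> w (- ?P))}"
  proof -
    have "sem W \<sigma> u t (SPref (Neg (Var p)) (Neg (Var q))) = {w. u (\<sigma> w (sem W \<sigma> u t (Neg (Var q)))) < u (\<sigma> w (sem W \<sigma> u t (Neg (Var p))))}"
      by (rule SP_eq[OF D, where xa="{}" and xb="{}"]) (auto simp: V)
    then show ?thesis by (simp only: sem_simps(2)[OF D])
  qed
  have R: "sem W \<sigma> u t (Ob v0 (Var q)) = {w. u (\<sigma> w (- ?Q)) < u (\<sigma> w ?Q)}"
    by (rule Ob_eq[OF D, where xa="{q}" and xb="{}"]) (use assms in \<open>auto simp: V\<close>)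
  have w1: "u (\<sigma> w (- ?P)) < u (\<sigma> w ?P)" "u (\<sigma> w (- ?Q)) < u (\<sigma> w (- ?P))"
    using w unfolding sem_simps(3)[OF D] L1 L2 by auto
  show "w \<in> sem W \<sigma> u t (Ob v0 (Var q))"
    using w1 unfolding R e1 e2 e3 e4
    by (cases "q \<in> w"; cases "p \<in> w") (auto simp: insert_absorb)
qed

lemma partB: assumes "p \<noteq> q"
  shows "delta_entails (Conj (Ob v0 (Var q)) (SPref (Var p) (Var q))) (Ob v0 (Var p))"
  unfolding delta_entails_def
proof (intro allI impI subsetI)
  fix W \<sigma> u t w assume D: "delta_model W \<sigma> u t" and
    w: "w \<in> sem W \<sigma> u t (Conj (Ob v0 (Var q)) (SPref (Var p) (Var q)))"
  let ?P = "sem W \<sigma> u t (Var p)" and ?Q = "sem W \<sigma> u t (Var q)"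
  note V = semV[OF D] dm(1,2)[OF D] sem_simps(2-6)[OF D]
  have e1: "\<And>w. \<sigma> w ?P = (w \<union> {p}) - {}" by (rule sel_char[OF D]) (auto simp: V)
  have e2: "\<And>w. \<sigma> w (- ?P) = (w \<union> {}) - {p}" by (rule sel_char[OF D]) (auto simp: V)
  have e3: "\<And>w. \<sigma> w ?Q = (w \<union> {q}) - {}" by (rule sel_char[OF D]) (auto simp: V)
  have e4: "\<And>w. \<sigma> w (- ?Q) = (w \<union> {}) - {q}" by (rule sel_char[OF D]) (auto simp: V)
  have L1: "sem W \<sigma> u t (Ob v0 (Var q)) = {w. u (\<sigma> w (- ?Q)) < u (\<sigma> w ?Q)}"
    by (rule Ob_eq[OF D, where xa="{q}" and xb="{}"]) (use assms in \<open>auto simp: V\<close>)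
  have L2: "sem W \<sigma> u t (SPref (Var p) (Var q)) = {w. u (\<sigma> w ?Q) < u (\<sigma> w ?P)}"
    by (rule SP_eq[OF D, where xa="{p}" and xb="{q}"]) (auto simp: V)
  have R: "sem W \<sigma> u t (Ob v0 (Var p)) = {w. u (\<sigma> w (- ?P)) < u (\<sigma> w ?P)}"
    by (rule Ob_eq[OF D, where xa="{p}" and xb="{}"]) (use assms in \<open>auto simp: V\<close>)
  have w1: "u (\<sigma> w (- ?Q)) < u (\<sigma> w ?Q)" "u (\<sigma> w ?Q) < u (\<sigma> w ?P)"
    using w unfolding sem_simps(3)[OF D] L1 L2 by auto
  show "w \<in> sem W \<sigma> u t (Ob v0 (Var p))"
    using w1 unfolding R e1 e2 e3 e4
    by (cases "q \<in> w"; cases "p \<in> w") (auto simp: insert_absorb)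
qed

lemma partDE: assumes "p \<noteq> q" "p \<noteq> r" "q \<noteq> r"
  shows "delta_entails (Conj (CondOb (Conj (Var p) (Var r)) (Var q)) (CondOb (Conj (Var p) (Neg (Var r))) (Var q)))
           (CondOb (Var p) (Var q)) \<and>
         delta_entails (CondOb (Var p) (Var q))
           (Disj (CondOb (Conj (Var p) (Var r)) (Var q)) (CondOb (Conj (Var p) (Neg (Var r))) (Var q)))"
  unfolding delta_entails_def
proof (intro conjI allI impI subsetI)
  fix W \<sigma> u and t :: "'a \<Rightarrow> 'a set set"
  assume D: "delta_model W \<sigma> u t"
  let ?P = "sem W \<sigma> u t (Var p)" and ?Q = "sem W \<sigma> u t (Var q)" and ?R = "sem W \<sigma> u t (Var r)"
  note V = semV[OF D] dm(1,2)[OF D] sem_simps(2-6)[OF D]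
  have e1: "\<And>w. \<sigma> w (?P \<inter> ?Q) = (w \<union> {p,q}) - {}" by (rule sel_char[OF D]) (auto simp: V)
  have e2: "\<And>w. \<sigma> w (?P - ?Q) = (w \<union> {p}) - {q}" by (rule sel_char[OF D]) (use assms in \<open>auto simp: V\<close>)
  have e3: "\<And>w. \<sigma> w (?P \<inter> ?R \<inter> ?Q) = (w \<union> {p,q,r}) - {}" by (rule sel_char[OF D]) (auto simp: V)
  have e4: "\<And>w. \<sigma> w (?P \<inter> ?R - ?Q) = (w \<union> {p,r}) - {q}" by (rule sel_char[OF D]) (use assms in \<open>auto simp: V\<close>)
  have e5: "\<And>w. \<sigma> w (?P \<inter> - ?R \<inter> ?Q) = (w \<union> {p,q}) - {r}" by (rule sel_char[OF D]) (use assms in \<open>auto simp: V\<close>)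
  have e6: "\<And>w. \<sigma> w (?P \<inter> - ?R - ?Q) = (w \<union> {p}) - {q,r}" by (rule sel_char[OF D]) (use assms in \<open>auto simp: V\<close>)
  have C1: "sem W \<sigma> u t (CondOb (Var p) (Var q)) = {w. u (\<sigma> w (?P - ?Q)) < u (\<sigma> w (?P \<inter> ?Q))}"
    by (rule CO_eq[OF D, where xa="{p,q}" and xb="{p}"]) (use assms in \<open>auto simp: V\<close>)
  have C2: "sem W \<sigma> u t (CondOb (Conj (Var p) (Var r)) (Var q)) = {w. u (\<sigma> w (?P \<inter> ?R - ?Q)) < u (\<sigma> w (?P \<inter> ?R \<inter> ?Q))}"
  proof -
    have "sem W \<sigma> u t (CondOb (Conj (Var p) (Var r)) (Var q)) = {w. u (\<sigma> w (sem W \<sigma> u t (Conj (Var p) (Var r)) - ?Q)) < u (\<sigma> w (sem W \<sigma> u t (Conj (Var p) (Var r)) \<inter> ?Q))}"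
      by (rule CO_eq[OF D, where xa="{p,q,r}" and xb="{p,r}"]) (use assms in \<open>auto simp: V\<close>)
    then show ?thesis by (simp only: sem_simps(2,3)[OF D])
  qed
  have C3: "sem W \<sigma> u t (CondOb (Conj (Var p) (Neg (Var r))) (Var q)) = {w. u (\<sigma> w (?P \<inter> - ?R - ?Q)) < u (\<sigma> w (?P \<inter> - ?R \<inter> ?Q))}"
  proof -
    have "sem W \<sigma> u t (CondOb (Conj (Var p) (Neg (Var r))) (Var q)) = {w. u (\<sigma> w (sem W \<sigma> u t (Conj (Var p) (Neg (Var r))) - ?Q)) < u (\<sigma> w (sem W \<sigma> u t (Conj (Var p) (Neg (Var r))) \<inter> ?Q))}"
      by (rule CO_eq[OF D, where xa="{p,q}" and xb="{p}"]) (use assms in \<open>auto simp: V\<close>)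
    then show ?thesis by (simp only: sem_simps(2,3)[OF D])
  qed
  note E = C1 C2 C3 e1 e2 e3 e4 e5 e6
  {
    fix w assume w: "w \<in> sem W \<sigma> u t (Conj (CondOb (Conj (Var p) (Var r)) (Var q)) (CondOb (Conj (Var p) (Neg (Var r))) (Var q)))"
    then have w1: "u (\<sigma> w (?P \<inter> ?R - ?Q)) < u (\<sigma> w (?P \<inter> ?R \<inter> ?Q))"
       "u (\<sigma> w (?P \<inter> - ?R - ?Q)) < u (\<sigma> w (?P \<inter> - ?R \<inter> ?Q))"
      unfolding sem_simps(3)[OF D] C2 C3 by auto
    show "w \<in> sem W \<sigma> u t (CondOb (Var p) (Var q))"
      unfolding C1 mem_Collect_eq e1 e2
    proof (cases "r \<in> w")
      case True
      have "w \<union> {p,q,r} - {} = w \<union> {p,q} - {}" "w \<union> {p,r} - {q} = w \<union> {p} - {q}" using True assms by auto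
      then show "u (w \<union> {p} - {q}) < u (w \<union> {p,q} - {})" using w1(1) unfolding e3 e4 by simp
    next
      case False
      have "w \<union> {p,q} - {r} = w \<union> {p,q} - {}" "w \<union> {p} - {q,r} = w \<union> {p} - {q}" using False assms by auto
      then show "u (w \<union> {p} - {q}) < u (w \<union> {p,q} - {})" using w1(2) unfolding e5 e6 by simp
    qed
  }
  {
    fix w assume w: "w \<in> sem W \<sigma> u t (CondOb (Var p) (Var q))"
    then have w1: "u (\<sigma> w (?P - ?Q)) < u (\<sigma> w (?P \<inter> ?Q))"
      unfolding C1 by auto
    show "w \<in> sem W \<sigma> u t (Disj (CondOb (Conj (Var p) (Var r)) (Var q)) (CondOb (Conj (Var p) (Neg (Var r))) (Var q)))"
    proof -
      have "u (w \<union> {p,r} - {q}) < u (w \<union> {p,q,r} - {}) \<or> u (w \<union> {p} - {q,r}) < u (w \<union> {p,q} - {r})"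
      proof (cases "r \<in> w")
        case True
        have "w \<union> {p,q,r} - {} = w \<union> {p,q} - {}" "w \<union> {p,r} - {q} = w \<union> {p} - {q}" using True assms by auto
        then show ?thesis using w1 unfolding e1 e2 by simp
      next
        case False
        have "w \<union> {p,q} - {r} = w \<union> {p,q} - {}" "w \<union> {p} - {q,r} = w \<union> {p} - {q}" using False assms by auto
        then show ?thesis using w1 unfolding e1 e2 by simp
      qed
      then show ?thesis unfolding sem_simps(4)[OF D] C2 C3 Un_iff mem_Collect_eq e3 e4 e5 e6 .
    qed
  }
qed


lemma partC: assumes "p \<noteq> q"
  shows "delta_entails (Conj (CondOb (Var p) (Var q)) (Var p)) (Ob v0 (Var q))"
  unfolding delta_entails_def
proof (intro allI impI subsetI)
  fix W \<sigma> u t w assume D: "delta_model W \<sigma> u t" and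
    w: "w \<in> sem W \<sigma> u t (Conj (CondOb (Var p) (Var q)) (Var p))"
  let ?P = "sem W \<sigma> u t (Var p)" and ?Q = "sem W \<sigma> u t (Var q)"
  note V = semV[OF D] dm(2)[OF D] sem_simps(2-6)[OF D]
  have e1: "\<And>w. \<sigma> w (?P \<inter> ?Q) = (w \<union> {p,q}) - {}" by (rule sel_char[OF D]) (auto simp: V)
  have e2: "\<And>w. \<sigma> w (?P - ?Q) = (w \<union> {p}) - {q}" by (rule sel_char[OF D]) (use assms in \<open>auto simp: V\<close>)
  have e3: "\<And>w. \<sigma> w ?Q = (w \<union> {q}) - {}" by (rule sel_char[OF D]) (auto simp: V)
  have e4: "\<And>w. \<sigma> w (- ?Q) = (w \<union> {}) - {q}" by (rule sel_char[OF D]) (auto simp: V)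
  have L: "sem W \<sigma> u t (CondOb (Var p) (Var q)) = {w. u (\<sigma> w (?P - ?Q)) < u (\<sigma> w (?P \<inter> ?Q))}"
    by (rule CO_eq[OF D, where xa="{p,q}" and xb="{p}"]) (use assms in \<open>auto simp: V\<close>)
  have R: "sem W \<sigma> u t (Ob v0 (Var q)) = {w. u (\<sigma> w (- ?Q)) < u (\<sigma> w ?Q)}"
    by (rule Ob_eq[OF D, where xa="{q}" and xb="{}"]) (use assms in \<open>auto simp: V\<close>)
  have pw: "p \<in> w" and w1: "u (\<sigma> w (?P - ?Q)) < u (\<sigma> w (?P \<inter> ?Q))" using w unfolding sem_simps(3)[OF D] L by (auto simp: V)
  show "w \<in> sem W \<sigma> u t (Ob v0 (Var q))"
    using w1 pw unfolding R e1 e2 e3 e4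
    by (cases "q \<in> w") (auto simp: insert_absorb)
qed

lemma partF: assumes "p \<noteq> q"
  shows "delta_entails (Conj (Ob v0 (Conj (Var p) (Var q))) (Ob v0 (Conj (Var p) (Neg (Var q))))) (Ob v0 (Var p))"
  unfolding delta_entails_def
proof (intro allI impI subsetI)
  fix W \<sigma> u t w assume D: "delta_model W \<sigma> u t" and
    w: "w \<in> sem W \<sigma> u t (Conj (Ob v0 (Conj (Var p) (Var q))) (Ob v0 (Conj (Var p) (Neg (Var q)))))"
  let ?P = "sem W \<sigma> u t (Var p)" and ?Q = "sem W \<sigma> u t (Var q)"
  note V = semV[OF D] dm(1,2)[OF D] sem_simps(2-6)[OF D]
  have e1: "\<And>w. \<sigma> w ?P = (w \<union> {p}) - {}" by (rule sel_char[OF D]) (auto simp: V)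
  have e2: "\<And>w. \<sigma> w (- ?P) = (w \<union> {}) - {p}" by (rule sel_char[OF D]) (auto simp: V)
  have e3: "\<And>w. \<sigma> w (?P \<inter> ?Q) = (w \<union> {p,q}) - {}" by (rule sel_char[OF D]) (auto simp: V)
  have e4: "\<And>w. \<sigma> w (?P \<inter> - ?Q) = (w \<union> {p}) - {q}" by (rule sel_char[OF D]) (use assms in \<open>auto simp: V\<close>)
  have L1: "sem W \<sigma> u t (Ob v0 (Conj (Var p) (Var q))) = {w. u (\<sigma> w (- (?P \<inter> ?Q))) < u (\<sigma> w (?P \<inter> ?Q))}"
  proof -
    have "sem W \<sigma> u t (Ob v0 (Conj (Var p) (Var q))) = {w. u (\<sigma> w (- sem W \<sigma> u t (Conj (Var p) (Var q)))) < u (\<sigma> w (sem W \<sigma> u t (Conj (Var p) (Var q))))}"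
      by (rule Ob_eq[OF D, where xa="{p,q}" and xb="{}"]) (auto simp: V)
    then show ?thesis by (simp only: sem_simps(2,3)[OF D])
  qed
  have L2: "sem W \<sigma> u t (Ob v0 (Conj (Var p) (Neg (Var q)))) = {w. u (\<sigma> w (- (?P \<inter> - ?Q))) < u (\<sigma> w (?P \<inter> - ?Q))}"
  proof -
    have "sem W \<sigma> u t (Ob v0 (Conj (Var p) (Neg (Var q)))) = {w. u (\<sigma> w (- sem W \<sigma> u t (Conj (Var p) (Neg (Var q))))) < u (\<sigma> w (sem W \<sigma> u t (Conj (Var p) (Neg (Var q)))))}"
      by (rule Ob_eq[OF D, where xa="{p}" and xb="{}"]) (use assms in \<open>auto simp: V\<close>)
    then show ?thesis by (simp only: sem_simps(2,3)[OF D])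
  qed
  have R: "sem W \<sigma> u t (Ob v0 (Var p)) = {w. u (\<sigma> w (- ?P)) < u (\<sigma> w ?P)}"
    by (rule Ob_eq[OF D, where xa="{p}" and xb="{}"]) (use assms in \<open>auto simp: V\<close>)
  have w1: "u (\<sigma> w (- (?P \<inter> ?Q))) < u (\<sigma> w (?P \<inter> ?Q))" "u (\<sigma> w (- (?P \<inter> - ?Q))) < u (\<sigma> w (?P \<inter> - ?Q))"
    using w unfolding sem_simps(3)[OF D] L1 L2 by auto
  have "u (w - {p}) < u (w \<union> {p})"
  proof (cases "p \<in> w")
    case pw: True
    then have ip: "w \<union> {p} = w" by auto
    show ?thesis
    proof (cases "q \<in> w")
      case qw: True
      have s1: "\<sigma> w (- (?P \<inter> - ?Q)) = w" by (rule sel_self[OF D]) (use qw in \<open>auto simp: V\<close>)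
      let ?x = "\<sigma> w (- (?P \<inter> ?Q))"
      have xin: "?x \<in> - (?P \<inter> ?Q)" using dm(3)[OF D, of "- (?P \<inter> ?Q)" w] V by auto
      have "?x = w - {p} \<or> ?x = w - {q}"
      proof (cases "p \<in> ?x")
        case False
        have "?x = w - {p}" by (rule sel_eq[OF D]) (use False pw in \<open>auto simp: V symdiff_def\<close>)
        then show ?thesis by simp
      next
        case True
        then have "q \<notin> ?x" using xin V by auto
        then have "?x = w - {q}" by (intro sel_eq[OF D]) (use qw in \<open>auto simp: V symdiff_def\<close>)
        then show ?thesis by simp
      qed
      note dj = this
      have "w \<union> {p,q} - {} = w" "w \<union> {p} - {q} = w - {q}" using pw qw by auto
      then have a: "u ?x < u w" and b: "u w < u (w - {q})" using w1 unfolding s1 e3 e4 by auto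
      show ?thesis using dj
      proof
        assume "?x = w - {p}" then show ?thesis using a pw by (simp add: insert_absorb)
      next
        assume "?x = w - {q}" then show ?thesis using a b by simp
      qed
    next
      case qw: False
      have s1: "\<sigma> w (- (?P \<inter> ?Q)) = w" by (rule sel_self[OF D]) (use qw in \<open>auto simp: V\<close>)
      let ?x = "\<sigma> w (- (?P \<inter> - ?Q))"
      have xin: "?x \<in> - (?P \<inter> - ?Q)" using dm(3)[OF D, of "- (?P \<inter> - ?Q)" w] V by auto
      have "?x = w - {p} \<or> ?x = insert q w"
      proof (cases "p \<in> ?x")
        case False
        have "?x = w - {p}" by (rule sel_eq[OF D]) (use False pw in \<open>auto simp: V symdiff_def\<close>)
        then show ?thesis by simp
      next
        case True
        then have "q \<in> ?x" using xin V by auto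
        then have "?x = insert q w" by (intro sel_eq[OF D]) (use qw pw in \<open>auto simp: V symdiff_def\<close>)
        then show ?thesis by simp
      qed
      note dj = this
      have "w \<union> {p,q} - {} = insert q w" "w \<union> {p} - {q} = w" using pw qw by auto
      then have a: "u w < u (insert q w)" and b: "u ?x < u w" using w1 unfolding s1 e3 e4 by auto
      show ?thesis using dj
      proof
        assume "?x = w - {p}" then show ?thesis using b pw by (simp add: insert_absorb)
      next
        assume "?x = insert q w" then show ?thesis using a b by simp
      qed
    qed
  next
    case pw: False
    have s1: "\<sigma> w (- (?P \<inter> ?Q)) = w" by (rule sel_self[OF D]) (use pw in \<open>auto simp: V\<close>)
    have s2: "\<sigma> w (- (?P \<inter> - ?Q)) = w" by (rule sel_self[OF D]) (use pw in \<open>auto simp: V\<close>)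
    show ?thesis
    proof (cases "q \<in> w")
      case True
      then have "w \<union> {p,q} - {} = w \<union> {p}" by auto
      then show ?thesis using w1(1) pw unfolding s1 e3 by simp
    next
      case False
      then have "w \<union> {p} - {q} = w \<union> {p}" using assms by auto
      then show ?thesis using w1(2) pw unfolding s2 e4 by simp
    qed
  qed
  then show "w \<in> sem W \<sigma> u t (Ob v0 (Var p))" unfolding R e1 e2 by simp
qed


theorem proposition4p2:
  fixes p q r v0 :: 'v
  assumes "p \<noteq> q" and "p \<noteq> r" and "q \<noteq> r"
  shows "delta_entails (Conj (Ob v0 (Var p)) (SPref (Neg (Var p)) (Neg (Var q)))) (Ob v0 (Var q)) \<and>
         delta_entails (Conj (Ob v0 (Var q)) (SPref (Var p) (Var q))) (Ob v0 (Var p)) \<and>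
         delta_entails (Conj (CondOb (Var p) (Var q)) (Var p)) (Ob v0 (Var q)) \<and>
         delta_entails (Conj (CondOb (Conj (Var p) (Var r)) (Var q)) (CondOb (Conj (Var p) (Neg (Var r))) (Var q)))
           (CondOb (Var p) (Var q)) \<and>
         delta_entails (CondOb (Var p) (Var q))
           (Disj (CondOb (Conj (Var p) (Var r)) (Var q)) (CondOb (Conj (Var p) (Neg (Var r))) (Var q))) \<and>
         delta_entails (Conj (Ob v0 (Conj (Var p) (Var q))) (Ob v0 (Conj (Var p) (Neg (Var q))))) (Ob v0 (Var p))"
  using partA[OF assms(1)] partB[OF assms(1)] partC[OF assms(1)] partDE[OF assms] partF[OF assms(1)] by blast

end
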